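(* Let $k\ge2$ be an integer and $p$ an odd prime. Let $$F(t)={}_{k}F_{k-1}\left(\tfrac12,\ldots,\tfrac12;1,\ldots,1\,\middle|\,t\right)=\sum_{n\ge0}\left(\frac{(\frac12)_n}{n!}\right)^{k}t^n,$$ with $k$ upper parameters equal to $\frac12$ and $k-1$ lower parameters equal to $1$. Then for all integers $s\ge1$, $$\frac{F(t)}{F(t^p)}\equiv \frac{F_{p^s}(t)}{F_{p^{s-1}}(t^p)}\pmod{p^s},$$ as power series in $\mathbb{Z}_p[[t]]$ (coefficientwise).
   Context: $(a)_n=a(a+1)\cdots(a+n-1)$ denotes the Pochhammer symbol. For a power series $G(t)$ and an integer $m\ge1$, $G_m(t)$ denotes its truncation: all terms of degree $\ge m$ are deleted; $G_m(t^p)$ denotes this truncation with $t$ replaced by $t^p$. For $k=2$ the series is $F(\frac12,\frac12,1\,|\,t)$. *)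

theory Defs
  imports "HOL-Computational_Algebra.Computational_Algebra"
begin

definition hypF :: "nat \<Rightarrow> rat fps" where
  "hypF k = Abs_fps (\<lambda>n. (pochhammer (1/2) n / fact n) ^ k)"

definition fps_trunc :: "nat \<Rightarrow> 'a::zero fps \<Rightarrow> 'a fps" where
  "fps_trunc m G = Abs_fps (\<lambda>n. if n < m then G $ n else 0)"

text \<open>Rational x is congruent to y modulo p^s in Z_p (i.e. x - y lies in p^s Z_(p)).\<close>
definition rat_cong_pow :: "nat \<Rightarrow> nat \<Rightarrow> rat \<Rightarrow> rat \<Rightarrow> bool" where
  "rat_cong_pow p s x y \<longleftrightarrow>
     (\<exists>a b :: int. \<not> int p dvd b \<and> x - y = of_int a / of_int b \<and> int p ^ s dvd a)"

definition fps_cong_pow :: "nat \<Rightarrow> nat \<Rightarrow> rat fps \<Rightarrow> rat fps \<Rightarrow> bool" where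
  "fps_cong_pow p s f g \<longleftrightarrow> (\<forall>n. rat_cong_pow p s (f $ n) (g $ n))"

end

theory Submission
  imports Defs
begin

definition Zp :: "nat \<Rightarrow> nat \<Rightarrow> rat \<Rightarrow> bool" where
  "Zp p r x \<longleftrightarrow> (\<exists>a b :: int. \<not> int p dvd b \<and> x = of_int a / of_int b \<and> int p ^ r dvd a)"

lemma rat_cong_pow_Zp: "rat_cong_pow p s x y = Zp p s (x - y)"
  by (simp add: rat_cong_pow_def Zp_def)

context
  fixes p :: nat
  assumes pp: "prime p"
begin

lemma pnd: "\<not> int p dvd 1"
  using prime_gt_1_nat[OF pp] by simp

lemma Zp_int: "int p ^ r dvd a \<Longrightarrow> Zp p r (of_int a)"
  unfolding Zp_def by (rule exI[of _ a], rule exI[of _ 1]) (use prime_gt_1_nat[OF pp] in auto)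

lemma pnd_mult: "\<not> int p dvd b \<Longrightarrow> \<not> int p dvd c \<Longrightarrow> \<not> int p dvd (b * c)"
  using pp by (metis prime_dvd_mult_iff prime_nat_int_transfer)

lemma Zp_0: "Zp p r 0"
  unfolding Zp_def by (rule exI[of _ 0], rule exI[of _ 1]) (use prime_gt_1_nat[OF pp] in simp)

lemma Zp_of_int: "Zp p 0 (of_int a)"
  by (rule Zp_int) simp

lemma Zp_of_nat: "Zp p 0 (of_nat a)"
  using Zp_of_int[of "int a"] by simp

lemma Zp_1: "Zp p 0 1"
  using Zp_of_int[of 1] by simp

lemma Zp_add: "Zp p r x \<Longrightarrow> Zp p r y \<Longrightarrow> Zp p r (x + y)"
proof -
  assume "Zp p r x" "Zp p r y"
  then obtain a b c d where h: "\<not> int p dvd b" "x = of_int a / of_int b" "int p ^ r dvd a"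
     "\<not> int p dvd d" "y = of_int c / of_int d" "int p ^ r dvd c" unfolding Zp_def by blast
  have b0: "b \<noteq> 0" "d \<noteq> 0" using h by auto
  have "x + y = of_int (a * d + c * b) / of_int (b * d)"
    using b0 h by (simp add: field_simps)
  moreover have "int p ^ r dvd a * d + c * b" using h by simp
  ultimately show ?thesis unfolding Zp_def using pnd_mult h by blast
qed

lemma Zp_uminus: "Zp p r x \<Longrightarrow> Zp p r (- x)"
proof -
  assume "Zp p r x"
  then obtain a b where h: "\<not> int p dvd b" "x = of_int a / of_int b" "int p ^ r dvd a"
    unfolding Zp_def by blast
  then have "- x = of_int (- a) / of_int b" by simp
  then show ?thesis unfolding Zp_def using h by (metis dvd_minus_iff)
qed

lemma Zp_diff: "Zp p r x \<Longrightarrow> Zp p r y \<Longrightarrow> Zp p r (x - y)"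
  using Zp_add[of r x "- y"] Zp_uminus[of r y] by simp

lemma Zp_mult: "Zp p r x \<Longrightarrow> Zp p r' y \<Longrightarrow> Zp p (r + r') (x * y)"
proof -
  assume "Zp p r x" "Zp p r' y"
  then obtain a b c d where h: "\<not> int p dvd b" "x = of_int a / of_int b" "int p ^ r dvd a"
     "\<not> int p dvd d" "y = of_int c / of_int d" "int p ^ r' dvd c" unfolding Zp_def by blast
  have "x * y = of_int (a * c) / of_int (b * d)"
    using h by simp
  moreover have "int p ^ (r + r') dvd a * c" using h by (simp add: power_add mult_dvd_mono)
  ultimately show ?thesis unfolding Zp_def using pnd_mult h by blast
qed

lemma Zp_mono: "r' \<le> r \<Longrightarrow> Zp p r x \<Longrightarrow> Zp p r' x"
  unfolding Zp_def by (metis dvd_trans le_imp_power_dvd)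

lemma Zp_mult0: "Zp p r x \<Longrightarrow> Zp p 0 y \<Longrightarrow> Zp p r (x * y)"
  using Zp_mult[of r x 0 y] by simp

lemma Zp_mult0': "Zp p 0 x \<Longrightarrow> Zp p r y \<Longrightarrow> Zp p r (x * y)"
  using Zp_mult[of 0 x r y] by simp

lemma Zp_div: "Zp p r x \<Longrightarrow> \<not> int p dvd c \<Longrightarrow> Zp p r (x / of_int c)"
proof -
  assume "Zp p r x" and c: "\<not> int p dvd c"
  then obtain a b where h: "\<not> int p dvd b" "x = of_int a / of_int b" "int p ^ r dvd a"
    unfolding Zp_def by blast
  have "x / of_int c = of_int a / of_int (b * c)" using h by simp
  then show ?thesis unfolding Zp_def using h pnd_mult c by blast
qed

lemma Zp_sum: "(\<And>i. i \<in> A \<Longrightarrow> Zp p r (f i)) \<Longrightarrow> Zp p r (sum f A)"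
  by (induction A rule: infinite_finite_induct) (auto simp: Zp_0 Zp_add)

lemma Zp_prod0: "(\<And>i. i \<in> A \<Longrightarrow> Zp p 0 (f i)) \<Longrightarrow> Zp p 0 (prod f A)"
  by (induction A rule: infinite_finite_induct) (auto simp: Zp_1 intro: Zp_mult[of 0 _ 0, simplified])

lemma Zp_power0: "Zp p 0 x \<Longrightarrow> Zp p 0 (x ^ k)"
  using Zp_prod0[of "{..<k}" "\<lambda>_. x"] by simp

lemma Zp_pmult: "Zp p r x \<Longrightarrow> Zp p (r + r') (of_nat p ^ r' * x)"
proof -
  have "Zp p r' (of_nat p ^ r')" using Zp_int[of r' "int p ^ r'"] by simp
  moreover assume "Zp p r x"
  ultimately show ?thesis using Zp_mult[of r' _ r x] by (simp add: add.commute)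
qed

lemma Zp_power_diff:
  assumes "Zp p 0 x" "Zp p 0 y" "Zp p r (x - y)"
  shows "Zp p r (x ^ k - y ^ k)"
proof -
  have "x ^ k - y ^ k = (x - y) * (\<Sum>i<k. y ^ (k - Suc i) * x ^ i)"
    by (rule power_diff_sumr2)
  moreover have "Zp p 0 (\<Sum>i<k. y ^ (k - Suc i) * x ^ i)"
    using assms by (intro Zp_sum) (metis Zp_mult add_0 Zp_power0)
  ultimately show ?thesis using assms Zp_mult0 by simp
qed

lemma Zp_prod3:
  assumes "Zp p r (a' - a)" "Zp p 0 a" "Zp p 0 a'" "Zp p 0 b" "Zp p e c" "Zp p e c'"
    "Zp p (r + e) (c' - c)"
  shows "Zp p (r + e) (a' * b * c' - a * b * c)"
proof -
  have "a' * b * c' - a * b * c = (a' - a) * (b * c') + a * b * (c' - c)"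
    by (simp add: algebra_simps)
  moreover have "Zp p (r + e) ((a' - a) * (b * c'))"
    using assms by (intro Zp_mult) (auto intro: Zp_mult0')
  moreover have "Zp p (r + e) (a * b * (c' - c))"
    using assms by (intro Zp_mult0') (auto intro: Zp_mult0' dest: Zp_mult[of 0 _ 0])
  ultimately show ?thesis by (simp add: Zp_add)
qed

end

definition Pcl :: "nat \<Rightarrow> nat \<Rightarrow> (nat \<Rightarrow> nat \<Rightarrow> rat) \<Rightarrow> bool" where
  "Pcl p e D \<longleftrightarrow> (\<forall>x y. D x y = - D y x) \<and> (\<forall>x y. Zp p e (D x y)) \<and>
     (\<forall>x y z t. Zp p (t + e) (D (x + z * p ^ t) y - D x y))"

definition Wsum :: "nat \<Rightarrow> (nat \<Rightarrow> rat) \<Rightarrow> nat \<Rightarrow> nat \<Rightarrow> (nat \<Rightarrow> nat \<Rightarrow> rat) \<Rightarrow> rat" where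
  "Wsum p A s L D = (\<Sum>j<p^s. if j \<le> L then A j * A (L - j) * D j (L - j) else 0)"

definition Lf :: "nat \<Rightarrow> nat \<Rightarrow> nat \<Rightarrow> nat" where
  "Lf p K \<mu> = (if \<mu> \<le> K mod p then K div p else K div p - 1)"

definition kf :: "nat \<Rightarrow> nat \<Rightarrow> nat \<Rightarrow> nat" where
  "kf p K \<mu> = (if \<mu> \<le> K mod p then K mod p - \<mu> else K mod p + p - \<mu>)"

definition cf :: "nat \<Rightarrow> nat \<Rightarrow> nat \<Rightarrow> bool" where
  "cf p K \<mu> \<longleftrightarrow> (\<mu> \<le> K mod p \<or> 0 < K div p)"

lemma sum_split_pq: fixes f :: "nat \<Rightarrow> rat" shows "(\<Sum>j<Q * p. f j) = (\<Sum>\<nu><Q. \<Sum>\<mu><p. f (\<mu> + p * \<nu>) :: rat)"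
proof -
  have "(\<Sum>j<Q * p. f j) = (\<Sum>\<nu><Q. sum f {\<nu> * p..<\<nu> * p + p})"
    using sum.nat_group[of f p Q] by simp
  also have "\<dots> = (\<Sum>\<nu><Q. \<Sum>\<mu><p. f (\<mu> + p * \<nu>))"
  proof (rule sum.cong[OF refl])
    fix \<nu>
    have "sum f {0 + \<nu> * p..<p + \<nu> * p} = (\<Sum>\<mu>\<in>{0..<p}. f (\<mu> + \<nu> * p))"
      by (rule sum.shift_bounds_nat_ivl)
    then show "sum f {\<nu> * p..<\<nu> * p + p} = (\<Sum>\<mu><p. f (\<mu> + p * \<nu>))"
      by (simp add: atLeast0LessThan add.commute mult.commute)
  qed
  finally show ?thesis .
qed

lemma digit_arith:
  fixes p K \<mu> \<nu> :: nat
  assumes "\<mu> < p"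
  shows "(\<mu> + p * \<nu> \<le> K) = (cf p K \<mu> \<and> \<nu> \<le> Lf p K \<mu>)"
    and "\<mu> + p * \<nu> \<le> K \<Longrightarrow> K - (\<mu> + p * \<nu>) = kf p K \<mu> + p * (Lf p K \<mu> - \<nu>)"
    and "kf p K \<mu> < p"
    and "kf p K (kf p K \<mu>) = \<mu>"
    and "cf p K (kf p K \<mu>) = cf p K \<mu>"
    and "Lf p K (kf p K \<mu>) = Lf p K \<mu>"
proof -
  define c where "c = K mod p"
  define K1 where "K1 = K div p"
  have p0: "p > 0" using assms by simp
  have K: "K = c + p * K1" unfolding c_def K1_def by simp
  have c: "c < p" unfolding c_def using p0 by simp
  show "(\<mu> + p * \<nu> \<le> K) = (cf p K \<mu> \<and> \<nu> \<le> Lf p K \<mu>)"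
  proof (cases "\<mu> \<le> c")
    case True
    have "(\<mu> + p * \<nu> \<le> K) = (\<nu> \<le> K1)"
    proof
      assume h: "\<mu> + p * \<nu> \<le> K"
      show "\<nu> \<le> K1"
      proof (rule ccontr)
        assume "\<not> \<nu> \<le> K1"
        then have "Suc K1 \<le> \<nu>" by simp
        then have "p * Suc K1 \<le> p * \<nu>" by (rule mult_le_mono2)
        then show False using h K c by simp
      qed
    next
      assume "\<nu> \<le> K1"
      then have "p * \<nu> \<le> p * K1" by (rule mult_le_mono2)
      then show "\<mu> + p * \<nu> \<le> K" using K True by linarith
    qed
    then show ?thesis using True unfolding cf_def Lf_def c_def K1_def by simp
  next
    case False
    have "(\<mu> + p * \<nu> \<le> K) = (Suc \<nu> \<le> K1)"
    proof
      assume h: "\<mu> + p * \<nu> \<le> K"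
      show "Suc \<nu> \<le> K1"
      proof (rule ccontr)
        assume "\<not> Suc \<nu> \<le> K1"
        then have "K1 \<le> \<nu>" by simp
        then have "p * K1 \<le> p * \<nu>" by (rule mult_le_mono2)
        then show False using h K False by linarith
      qed
    next
      assume "Suc \<nu> \<le> K1"
      then have "p * Suc \<nu> \<le> p * K1" by (rule mult_le_mono2)
      then show "\<mu> + p * \<nu> \<le> K" using K assms by simp
    qed
    then show ?thesis using False unfolding cf_def Lf_def c_def K1_def by auto
  qed
  show "\<mu> + p * \<nu> \<le> K \<Longrightarrow> K - (\<mu> + p * \<nu>) = kf p K \<mu> + p * (Lf p K \<mu> - \<nu>)"
  proof -
    assume h: "\<mu> + p * \<nu> \<le> K"
    show ?thesis
    proof (cases "\<mu> \<le> c")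
      case True
      then have "\<nu> \<le> K1" using h \<open>(\<mu> + p * \<nu> \<le> K) = _\<close> unfolding Lf_def c_def K1_def by simp
      then obtain d where "K1 = \<nu> + d" using le_Suc_ex by blast
      then have "p * K1 = p * \<nu> + p * (K1 - \<nu>)"
        by (simp add: algebra_simps)
      then show ?thesis using True K unfolding kf_def Lf_def c_def[symmetric] K1_def[symmetric] by simp
    next
      case False
      then have "Suc \<nu> \<le> K1" using h \<open>(\<mu> + p * \<nu> \<le> K) = _\<close> unfolding cf_def Lf_def c_def K1_def by auto
      then obtain d where "K1 = Suc \<nu> + d" using le_Suc_ex by blast
      then have "p * K1 = p * \<nu> + p + p * (K1 - 1 - \<nu>)"
        by (simp add: algebra_simps)
      then show ?thesis using False K assms unfolding kf_def Lf_def c_def[symmetric] K1_def[symmetric] by simp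
    qed
  qed
  show "kf p K \<mu> < p" using c assms unfolding kf_def c_def[symmetric] by auto
  show "kf p K (kf p K \<mu>) = \<mu>" "cf p K (kf p K \<mu>) = cf p K \<mu>" "Lf p K (kf p K \<mu>) = Lf p K \<mu>"
    using c assms unfolding kf_def cf_def Lf_def c_def[symmetric] K1_def[symmetric] by auto
qed

lemma Wsum_add: "Wsum p A s L D1 + Wsum p A s L D2 = Wsum p A s L (\<lambda>x y. D1 x y + D2 x y)"
  unfolding Wsum_def sum.distrib[symmetric] by (rule sum.cong) (auto simp: algebra_simps)


context
  fixes p :: nat and A \<Phi> :: "nat \<Rightarrow> rat"
  assumes pp: "prime p" and podd: "odd p"
    and A\<Phi>: "\<And>n. A n = \<Phi> n * A (n div p)"
    and A0: "\<And>n. Zp p 0 (A n)" and \<Phi>0: "\<And>n. Zp p 0 (\<Phi> n)"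
    and \<Phi>c: "\<And>n z t. Zp p (t + 1) (\<Phi> (n + z * p ^ (t + 1)) - \<Phi> n)"
begin

lemma p0: "p > 0" using pp prime_gt_0_nat by blast

lemma \<Phi>1: "Zp p 1 (\<Phi> (a + p * x) - \<Phi> a)"
  using \<Phi>c[where n=a and z=x and t=0] by (simp add: mult.commute)

lemma \<Phi>\<Phi>1: "Zp p 1 (\<Phi> (a + p * x) * \<Phi> (b + p * y) - \<Phi> a * \<Phi> b)"
proof -
  have "\<Phi> (a + p * x) * \<Phi> (b + p * y) - \<Phi> a * \<Phi> b =
    (\<Phi> (a + p * x) - \<Phi> a) * \<Phi> (b + p * y) + \<Phi> a * (\<Phi> (b + p * y) - \<Phi> b)"
    by (simp add: algebra_simps)
  moreover have "Zp p 1 ((\<Phi> (a + p * x) - \<Phi> a) * \<Phi> (b + p * y))"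
    using Zp_mult0[OF pp \<Phi>1 \<Phi>0] .
  moreover have "Zp p 1 (\<Phi> a * (\<Phi> (b + p * y) - \<Phi> b))"
    using Zp_mult0'[OF pp \<Phi>0 \<Phi>1] .
  ultimately show ?thesis using Zp_add[OF pp] by simp
qed

lemma Pcl_step:
  assumes P: "Pcl p e D"
  shows "Pcl p (Suc e) (\<lambda>x y. \<Phi> (\<alpha> + p*x) * \<Phi> (\<beta> + p*y) * D (\<alpha> + p*x) (\<beta> + p*y)
            + \<Phi> (\<beta> + p*x) * \<Phi> (\<alpha> + p*y) * D (\<beta> + p*x) (\<alpha> + p*y))"
proof -
  have as: "\<And>x y. D x y = - D y x" and bd: "\<And>x y. Zp p e (D x y)"
    and ct: "\<And>x y z t. Zp p (t + e) (D (x + z * p ^ t) y - D x y)"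
    using P unfolding Pcl_def by blast+
  have gen: "Zp p (Suc e) (D (a + p*x) (b + p*y) - D a b)" for a b x y
  proof -
    have 1: "Zp p (1 + e) (D (a + x * p ^ 1) (b + p*y) - D a (b + p*y))" by (rule ct)
    have 2: "Zp p (1 + e) (D (b + y * p ^ 1) a - D b a)" by (rule ct)
    have "D (a + p*x) (b + p*y) - D a b = (D (a + x * p ^ 1) (b + p*y) - D a (b + p*y))
       - (D (b + y * p ^ 1) a - D b a)"
      using as[of a "b + p*y"] as[of a b] by (simp add: mult.commute)
    then show ?thesis using Zp_diff[OF pp 1 2] by simp
  qed
  define D' where "D' = (\<lambda>x y. \<Phi> (\<alpha> + p*x) * \<Phi> (\<beta> + p*y) * D (\<alpha> + p*x) (\<beta> + p*y)
            + \<Phi> (\<beta> + p*x) * \<Phi> (\<alpha> + p*y) * D (\<beta> + p*x) (\<alpha> + p*y))"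
  have "D' x y = - D' y x" for x y
    unfolding D'_def using as[of "\<alpha> + p*x" "\<beta> + p*y"] as[of "\<beta> + p*x" "\<alpha> + p*y"]
    by (simp add: algebra_simps)
  moreover have "Zp p (Suc e) (D' x y)" for x y
  proof -
    define d where "d = D \<alpha> \<beta>"
    have "D' x y = \<Phi> (\<alpha> + p*x) * \<Phi> (\<beta> + p*y) * (D (\<alpha> + p*x) (\<beta> + p*y) - D \<alpha> \<beta>)
      + \<Phi> (\<beta> + p*x) * \<Phi> (\<alpha> + p*y) * (D (\<beta> + p*x) (\<alpha> + p*y) - D \<beta> \<alpha>)
      + d * ((\<Phi> (\<alpha> + p*x) * \<Phi> (\<beta> + p*y) - \<Phi> \<alpha> * \<Phi> \<beta>) - (\<Phi> (\<beta> + p*x) * \<Phi> (\<alpha> + p*y) - \<Phi> \<beta> * \<Phi> \<alpha>))"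
      unfolding D'_def d_def using as[of \<beta> \<alpha>] by (simp add: algebra_simps)
    moreover have "Zp p (Suc e) (\<Phi> (\<alpha> + p*x) * \<Phi> (\<beta> + p*y) * (D (\<alpha> + p*x) (\<beta> + p*y) - D \<alpha> \<beta>))"
      by (intro Zp_mult0'[OF pp] Zp_mult[OF pp, of 0 _ 0, simplified] \<Phi>0 gen)
    moreover have "Zp p (Suc e) (\<Phi> (\<beta> + p*x) * \<Phi> (\<alpha> + p*y) * (D (\<beta> + p*x) (\<alpha> + p*y) - D \<beta> \<alpha>))"
      by (intro Zp_mult0'[OF pp] Zp_mult[OF pp, of 0 _ 0, simplified] \<Phi>0 gen)
    moreover have "Zp p (e + 1) (d * ((\<Phi> (\<alpha> + p*x) * \<Phi> (\<beta> + p*y) - \<Phi> \<alpha> * \<Phi> \<beta>) - (\<Phi> (\<beta> + p*x) * \<Phi> (\<alpha> + p*y) - \<Phi> \<beta> * \<Phi> \<alpha>)))"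
      unfolding d_def by (intro Zp_mult[OF pp] bd Zp_diff[OF pp] \<Phi>\<Phi>1)
    ultimately show ?thesis using Zp_add[OF pp] by simp
  qed
  moreover have "Zp p (t + Suc e) (D' (x + z * p ^ t) y - D' x y)" for x y z t
  proof -
    have e1: "a + p * (x + z * p ^ t) = (a + p * x) + z * p ^ (t + 1)" for a
      by (simp add: algebra_simps)
    have T: "Zp p (t + 1 + e) (\<Phi> ((a + p*x) + z * p ^ (t + 1)) * \<Phi> (b + p*y) * D ((a + p*x) + z * p ^ (t + 1)) (b + p*y)
       - \<Phi> (a + p*x) * \<Phi> (b + p*y) * D (a + p*x) (b + p*y))" for a b
      by (rule Zp_prod3[OF pp \<Phi>c \<Phi>0 \<Phi>0 \<Phi>0 bd bd ct])
    have "D' (x + z * p ^ t) y - D' x y =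
       (\<Phi> ((\<alpha> + p*x) + z * p ^ (t + 1)) * \<Phi> (\<beta> + p*y) * D ((\<alpha> + p*x) + z * p ^ (t + 1)) (\<beta> + p*y)
       - \<Phi> (\<alpha> + p*x) * \<Phi> (\<beta> + p*y) * D (\<alpha> + p*x) (\<beta> + p*y)) +
       (\<Phi> ((\<beta> + p*x) + z * p ^ (t + 1)) * \<Phi> (\<alpha> + p*y) * D ((\<beta> + p*x) + z * p ^ (t + 1)) (\<alpha> + p*y)
       - \<Phi> (\<beta> + p*x) * \<Phi> (\<alpha> + p*y) * D (\<beta> + p*x) (\<alpha> + p*y))"
      unfolding D'_def e1 by simp
    then show ?thesis using Zp_add[OF pp T T] by simp
  qed
  ultimately show ?thesis unfolding Pcl_def D'_def by blast
qed

lemma W_split: "Wsum p A (Suc s) K D = (\<Sum>\<mu><p. if cf p K \<mu> then Wsum p A s (Lf p K \<mu>)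
   (\<lambda>x y. \<Phi> (\<mu> + p*x) * \<Phi> (kf p K \<mu> + p*y) * D (\<mu> + p*x) (kf p K \<mu> + p*y)) else 0)"
proof -
  define g where "g = (\<lambda>j. if j \<le> K then A j * A (K - j) * D j (K - j) else 0)"
  have "Wsum p A (Suc s) K D = (\<Sum>j<p^s * p. g j)"
    unfolding Wsum_def g_def by (simp add: mult.commute)
  also have "\<dots> = (\<Sum>\<nu><p^s. \<Sum>\<mu><p. g (\<mu> + p * \<nu>))" by (rule sum_split_pq)
  also have "\<dots> = (\<Sum>\<mu><p. \<Sum>\<nu><p^s. g (\<mu> + p * \<nu>))" by (rule sum.swap)
  finally have eq: "Wsum p A (Suc s) K D = (\<Sum>\<mu><p. \<Sum>\<nu><p^s. g (\<mu> + p * \<nu>))" .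
  show ?thesis unfolding eq
  proof (rule sum.cong[OF refl])
    fix \<mu> assume "\<mu> \<in> {..<p}"
    then have mu: "\<mu> < p" by simp
    note da = digit_arith[OF mu]
    show "(\<Sum>\<nu><p^s. g (\<mu> + p * \<nu>)) = (if cf p K \<mu> then Wsum p A s (Lf p K \<mu>)
      (\<lambda>x y. \<Phi> (\<mu> + p*x) * \<Phi> (kf p K \<mu> + p*y) * D (\<mu> + p*x) (kf p K \<mu> + p*y)) else 0)"
    proof (cases "cf p K \<mu>")
      case False
      then show ?thesis unfolding g_def using da(1) by simp
    next
      case True
      show ?thesis unfolding Wsum_def using True
      proof (simp, intro sum.cong refl)
        fix \<nu> assume "\<nu> \<in> {..<p^s}"
        show "g (\<mu> + p * \<nu>) = (if \<nu> \<le> Lf p K \<mu> then A \<nu> * A (Lf p K \<mu> - \<nu>) *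
          (\<Phi> (\<mu> + p * \<nu>) * \<Phi> (kf p K \<mu> + p * (Lf p K \<mu> - \<nu>)) *
           D (\<mu> + p * \<nu>) (kf p K \<mu> + p * (Lf p K \<mu> - \<nu>))) else 0)"
        proof (cases "\<nu> \<le> Lf p K \<mu>")
          case False
          then show ?thesis unfolding g_def using da(1) by simp
        next
          case T2: True
          then have le: "\<mu> + p * \<nu> \<le> K" using da(1) True by simp
          have d1: "(\<mu> + p * \<nu>) div p = \<nu>" using mu by simp
          have d2: "(kf p K \<mu> + p * (Lf p K \<mu> - \<nu>)) div p = Lf p K \<mu> - \<nu>" using da(3)[of K] by simp
          have "A (\<mu> + p * \<nu>) = \<Phi> (\<mu> + p * \<nu>) * A \<nu>" using A\<Phi>[of "\<mu> + p * \<nu>"] d1 by simp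
          moreover have "A (kf p K \<mu> + p * (Lf p K \<mu> - \<nu>)) = \<Phi> (kf p K \<mu> + p * (Lf p K \<mu> - \<nu>)) * A (Lf p K \<mu> - \<nu>)"
            using A\<Phi>[of "kf p K \<mu> + p * (Lf p K \<mu> - \<nu>)"] d2 by simp
          ultimately show ?thesis unfolding g_def using le T2 da(2)[OF le] by simp
        qed
      qed
    qed
  qed
qed

lemma p2: "\<not> int p dvd 2"
proof
  assume "int p dvd 2"
  then have "p dvd 2" by presburger
  then have "p \<le> 2" by (simp add: dvd_imp_le)
  moreover have "p \<ge> 2" using pp prime_ge_2_nat by blast
  ultimately show False using podd by simp
qed

lemma Wsum_Zp: "Pcl p e D \<Longrightarrow> Zp p (s + e) (Wsum p A s L D)"
proof (induction s arbitrary: e L D)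
  case 0
  have "Wsum p A 0 L D = A 0 * A L * D 0 L" unfolding Wsum_def by simp
  moreover have "Zp p e (D 0 L)" using 0 unfolding Pcl_def by blast
  moreover have "Zp p 0 (A 0 * A L)" using Zp_mult[OF pp A0 A0] by simp
  ultimately show ?case using Zp_mult0'[OF pp] by simp
next
  case (Suc s)
  define E where "E = (\<lambda>\<mu> x y. \<Phi> (\<mu> + p*x) * \<Phi> (kf p L \<mu> + p*y) * D (\<mu> + p*x) (kf p L \<mu> + p*y))"
  define G where "G = (\<lambda>\<mu>. if cf p L \<mu> then Wsum p A s (Lf p L \<mu>) (E \<mu>) else 0)"
  have S: "Wsum p A (Suc s) L D = (\<Sum>\<mu><p. G \<mu>)"
    unfolding W_split G_def E_def by simp
  have R: "(\<Sum>\<mu><p. G \<mu>) = (\<Sum>\<mu><p. G (kf p L \<mu>))"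
    by (rule sum.reindex_bij_witness[where i="kf p L" and j="kf p L"]) (auto simp: digit_arith)
  have "2 * (\<Sum>\<mu><p. G \<mu>) = (\<Sum>\<mu><p. G \<mu> + G (kf p L \<mu>))"
    by (simp add: sum.distrib R[symmetric])
  moreover have "Zp p (Suc s + e) (G \<mu> + G (kf p L \<mu>))" if "\<mu> < p" for \<mu>
  proof (cases "cf p L \<mu>")
    case False
    then show ?thesis unfolding G_def using digit_arith[OF that] Zp_0[OF pp] by simp
  next
    case True
    note da = digit_arith[OF that, where K=L]
    have "G \<mu> + G (kf p L \<mu>) = Wsum p A s (Lf p L \<mu>) (\<lambda>x y. E \<mu> x y + E (kf p L \<mu>) x y)"
      unfolding G_def using True da by (simp add: Wsum_add)
    moreover have "Pcl p (Suc e) (\<lambda>x y. E \<mu> x y + E (kf p L \<mu>) x y)"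
      unfolding E_def da(4) using Pcl_step[OF Suc.prems, of \<mu> "kf p L \<mu>"] .
    ultimately show ?thesis using Suc.IH[of "Suc e"] by simp
  qed
  ultimately have "Zp p (Suc s + e) (2 * (\<Sum>\<mu><p. G \<mu>))"
    using Zp_sum[OF pp, of "{..<p}" "Suc s + e" "\<lambda>\<mu>. G \<mu> + G (kf p L \<mu>)"] by simp
  then have "Zp p (Suc s + e) (2 * (\<Sum>\<mu><p. G \<mu>) / of_int 2)"
    by (rule Zp_div[OF pp _ p2])
  then show ?case using S by simp
qed

end

definition aa :: "nat \<Rightarrow> rat" where
  "aa n = (\<Prod>i<n. of_nat (2*i+1) / of_nat (2*i+2))"

definition Op :: "nat \<Rightarrow> nat \<Rightarrow> int" where
  "Op p n = (\<Prod>i\<in>{i. i < n \<and> \<not> p dvd (2*i+1)}. int (2*i+1))"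

definition Ep :: "nat \<Rightarrow> nat \<Rightarrow> int" where
  "Ep p n = (\<Prod>i\<in>{i. i < n \<and> \<not> p dvd (i+1)}. int (2*i+2))"

definition cc :: "nat \<Rightarrow> nat \<Rightarrow> rat" where
  "cc p n = (if p < 2 * (n mod p) then of_nat p * of_nat (2 * (n div p) + 1) else 1)"

definition ph :: "nat \<Rightarrow> nat \<Rightarrow> rat" where
  "ph p n = cc p n * of_int (Op p n) / of_int (Ep p n)"

lemma aa_Suc: "aa (Suc n) = aa n * (of_nat (2*n+1) / of_nat (2*n+2))"
  unfolding aa_def by simp

lemma set_Suc: "{i. i < Suc n \<and> P i} = (if P n then insert n {i. i < n \<and> P i} else {i. i < n \<and> P i})"
  by (auto simp: less_Suc_eq)

lemma Op_Suc: "Op p (Suc n) = (if \<not> p dvd (2*n+1) then Op p n * int (2*n+1) else Op p n)"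
  unfolding Op_def set_Suc by (simp add: mult.commute)

lemma Ep_Suc: "Ep p (Suc n) = (if \<not> p dvd (n+1) then Ep p n * int (2*n+2) else Ep p n)"
  unfolding Ep_def set_Suc by (simp add: mult.commute)

context
  fixes p :: nat
  assumes pp: "prime p" and podd: "odd p"
begin

lemma p3: "p \<ge> 3"
proof -
  have "p \<ge> 2" using pp prime_ge_2_nat by blast
  moreover have "p \<noteq> 2" using podd by auto
  ultimately show ?thesis by simp
qed

lemma Ep_nd: "\<not> int p dvd Ep p n"
proof
  assume "int p dvd Ep p n"
  moreover have "prime (int p)" using pp by simp
  ultimately obtain i where i: "\<not> p dvd (i+1)" "int p dvd int (2*i+2)"
    unfolding Ep_def by (subst (asm) prime_dvd_prod_iff) auto
  then have "p dvd (2*i+2)" by (simp only: int_dvd_int_iff)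
  then have "p dvd 2 * (i+1)" by (simp add: algebra_simps)
  then have "p dvd 2 \<or> p dvd (i+1)" using pp prime_dvd_mult_iff by blast
  then show False using i p3 by (auto dest: dvd_imp_le)
qed

lemma Ep_nz: "Ep p n \<noteq> 0"
  using Ep_nd[of n] by (metis dvd_0_right)

lemma dvd_odd_iff:
  assumes "v < p"
  shows "p dvd (2*(v + p*u)+1) \<longleftrightarrow> 2*v+1 = p"
proof -
  have "p dvd (2*(v + p*u)+1) \<longleftrightarrow> p dvd ((2*v+1) + p*(2*u))" by (simp add: algebra_simps)
  also have "\<dots> \<longleftrightarrow> p dvd (2*v+1)" by (metis dvd_add_times_triv_right_iff mult.commute)
  also have "\<dots> \<longleftrightarrow> 2*v+1 = p"
  proof
    assume "p dvd (2*v+1)"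
    then obtain c where c: "2*v+1 = p*c" by blast
    then have "c \<noteq> 0" by (cases "c = 0") auto
    moreover have "c < 2"
    proof (rule ccontr)
      assume "\<not> c < 2"
      then have "p * 2 \<le> p * c" by simp
      then show False using c assms by linarith
    qed
    ultimately have "c = 1" by simp
    then show "2*v+1 = p" using c by simp
  qed auto
  finally show ?thesis .
qed

lemma aa_ph: "aa n = ph p n * aa (n div p)"
proof (induction n)
  case 0
  then show ?case unfolding aa_def ph_def cc_def Op_def Ep_def by simp
next
  case (Suc n)
  define v where "v = n mod p"
  define u where "u = n div p"
  have n: "n = v + p * u" unfolding v_def u_def by simp
  have vp: "v < p" unfolding v_def using p3 by simp
  have IH: "aa n = cc p n * of_int (Op p n) / of_int (Ep p n) * aa u"
    using Suc.IH unfolding ph_def u_def .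
  have Epn: "(of_int (Ep p n) :: rat) \<noteq> 0" using Ep_nz by simp
  show ?case
  proof (cases "Suc v < p")
    case True
    have sn: "Suc n = Suc v + u * p" using n by simp
    have dd: "(Suc v + u * p) div p = u + Suc v div p" by (rule div_mult_self1) (use p3 in simp)
    have m: "Suc n mod p = Suc v" "Suc n div p = u" unfolding sn using True dd by simp_all
    have nd: "\<not> p dvd (n+1)"
    proof
      assume "p dvd (n+1)"
      then have "p dvd (Suc v + p * u)" using n by simp
      then have "p dvd Suc v" by (metis dvd_add_times_triv_right_iff mult.commute)
      then show False using True by (auto dest: dvd_imp_le)
    qed
    have E: "Ep p (Suc n) = Ep p n * int (2*n+2)" using Ep_Suc nd by simp
    show ?thesis
    proof (cases "2*v+1 = p")
      case True
      have d: "p dvd (2*n+1)" using dvd_odd_iff[OF vp, of u] True n by simp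
      have O: "Op p (Suc n) = Op p n" using Op_Suc d by simp
      have c1: "cc p n = 1" unfolding cc_def v_def[symmetric] using True by simp
      have c2: "cc p (Suc n) = of_nat p * of_nat (2*u+1)" unfolding cc_def m using True by simp
      have e0: "(of_nat (2*n+1) :: rat) = of_nat p * of_nat (2*u+1)"
        using True n by (simp add: algebra_simps)
      have gen: "\<And>E Y X P Q au :: rat. E \<noteq> 0 \<Longrightarrow> Y \<noteq> 0 \<Longrightarrow> X = P \<Longrightarrow>
         1 * Q / E * au * (X / Y) = P * Q / (E * Y) * au" by (simp add: field_simps)
      have Y: "(of_nat (2*n+2) :: rat) \<noteq> 0" by (simp only: of_nat_eq_0_iff)
      show ?thesis unfolding aa_Suc IH ph_def m E O c1 c2 of_int_mult of_int_of_nat_eq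
        by (rule gen[OF Epn Y e0])
    next
      case False
      have d: "\<not> p dvd (2*n+1)" using dvd_odd_iff[OF vp, of u] False n by simp
      have O: "Op p (Suc n) = Op p n * int (2*n+1)" using Op_Suc d by simp
      have iff: "(p < 2 * Suc v) = (p < 2 * v)" using False podd by presburger
      have c: "cc p (Suc n) = cc p n"
        unfolding cc_def m v_def[symmetric] u_def[symmetric] using iff by simp
      show ?thesis unfolding aa_Suc IH ph_def m E O c using Epn
        by (simp add: field_simps)
    qed
  next
    case False
    then have v: "Suc v = p" using vp by simp
    have sn: "Suc n = Suc u * p" using n v by simp
    have m: "Suc n mod p = 0" "Suc n div p = Suc u" unfolding sn using p3 by simp_all
    have E: "Ep p (Suc n) = Ep p n"
      using Ep_Suc[of p n] m(1) by (simp add: mod_0_imp_dvd)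
    have d: "\<not> p dvd (2*n+1)" using dvd_odd_iff[OF vp, of u] v n p3 by simp
    have O: "Op p (Suc n) = Op p n * int (2*n+1)" using Op_Suc d by simp
    have c1: "cc p n = of_nat p * of_nat (2*u+1)" unfolding cc_def v_def[symmetric] u_def[symmetric]
      using v p3 by simp
    have c2: "cc p (Suc n) = 1" unfolding cc_def m by simp
    have e: "(of_nat (2*n+2) :: rat) = of_nat p * of_nat (2*u+2)"
    proof -
      have "2*n+2 = p * (2*u+2)" using n v by (simp add: algebra_simps)
      then show ?thesis by (metis of_nat_mult)
    qed
    have pz: "(of_nat p :: rat) \<noteq> 0" using p3 by simp
    have Z: "(of_nat (2*u+2) :: rat) \<noteq> 0" by (simp only: of_nat_eq_0_iff)
    have gen: "\<And>E Z P Y w Q au X :: rat. E \<noteq> 0 \<Longrightarrow> Z \<noteq> 0 \<Longrightarrow> P \<noteq> 0 \<Longrightarrow> Y = P * Z \<Longrightarrow>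
      P * w * Q / E * au * (X / Y) = 1 * (Q * X) / E * (au * (w / Z))"
      by (simp add: field_simps)
    show ?thesis unfolding aa_Suc IH ph_def m E O c1 c2 of_int_mult of_int_of_nat_eq
      by (rule gen[OF Epn Z pz e])
  qed
qed

end

lemma dvd_prod_diff:
  fixes f g :: "nat \<Rightarrow> int"
  assumes "\<And>i. i \<in> A \<Longrightarrow> q dvd f i - g i"
  shows "q dvd prod f A - prod g A"
  using assms
proof (induction A rule: infinite_finite_induct)
  case (insert x F)
  have "prod f (insert x F) - prod g (insert x F) = f x * (prod f F - prod g F) + (f x - g x) * prod g F"
    using insert.hyps by (simp add: algebra_simps)
  then show ?case using insert by simp
qed auto

lemma block_cong:
  fixes p q m :: nat
  assumes pp: "prime p" and podd: "odd p" and q: "q = p ^ (t+1)"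
  shows "int q dvd (\<Prod>i\<in>{i. m \<le> i \<and> i < m + q \<and> \<not> p dvd (2*i+1)}. int (2*i+1))
                 - (\<Prod>i\<in>{i. m \<le> i \<and> i < m + q \<and> \<not> p dvd (i+1)}. int (2*i+2))"
proof -
  have q0: "q > 0" using q pp prime_gt_0_nat by simp
  have qodd: "odd q" using q podd by simp
  define h where "h = (q + 1) div 2"
  have h2: "2 * h = q + 1" unfolding h_def using qodd by simp
  have hq: "h \<le> q" using h2 q0 by linarith
  define \<tau> where "\<tau> = (\<lambda>i. m + (i - m + (q - h)) mod q)"
  define \<sigma> where "\<sigma> = (\<lambda>j. m + (j - m + h) mod q)"
  have pq: "int p dvd int q" using q by simp
  have tau_range: "m \<le> \<tau> i \<and> \<tau> i < m + q" for i unfolding \<tau>_def using q0 by simp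
  have sigma_range: "m \<le> \<sigma> j \<and> \<sigma> j < m + q" for j unfolding \<sigma>_def using q0 by simp
  have st: "\<sigma> (\<tau> i) = i" if "m \<le> i" "i < m + q" for i
  proof -
    have "\<sigma> (\<tau> i) = m + ((i - m + (q - h)) mod q + h) mod q" unfolding \<sigma>_def \<tau>_def by simp
    also have "\<dots> = m + (i - m + (q - h) + h) mod q" by (simp add: mod_add_left_eq)
    also have "i - m + (q - h) + h = (i - m) + q" using hq by simp
    also have "((i - m) + q) mod q = i - m" using that by (simp only: mod_add_self2) (simp add: mod_less)
    finally show ?thesis using that by simp
  qed
  have ts: "\<tau> (\<sigma> j) = j" if "m \<le> j" "j < m + q" for j
  proof -
    have "\<tau> (\<sigma> j) = m + ((j - m + h) mod q + (q - h)) mod q" unfolding \<sigma>_def \<tau>_def by simp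
    also have "\<dots> = m + (j - m + h + (q - h)) mod q" by (simp add: mod_add_left_eq)
    also have "j - m + h + (q - h) = (j - m) + q" using hq by simp
    also have "((j - m) + q) mod q = j - m" using that by (simp only: mod_add_self2) (simp add: mod_less)
    finally show ?thesis using that by simp
  qed
  have cong: "int q dvd int (2 * \<tau> i + 2) - int (2*i+1)" if "m \<le> i" "i < m + q" for i
  proof -
    define w where "w = i - m"
    define r where "r = (w + (q - h)) mod q"
    define k where "k = (w + (q - h)) div q"
    have e1: "w + (q - h) = q * k + r" unfolding r_def k_def by simp
    have e2: "\<tau> i = m + r" unfolding \<tau>_def r_def w_def by simp
    have e3: "i = m + w" unfolding w_def using that by simp
    have "int (w + (q - h)) = int (q * k + r)" using e1 by (simp only:)
    then have "int w + int q - int h = int q * int k + int r" using hq by (simp add: of_nat_diff)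
    moreover have "2 * int h = int q + 1" using h2 by linarith
    ultimately have "int (2 * \<tau> i + 2) - int (2*i+1) = int q - 2 * (int q * int k)"
      using e2 e3 by linarith
    also have "\<dots> = int q * (1 - 2 * int k)" by (simp add: algebra_simps)
    finally show ?thesis by (metis dvd_triv_left)
  qed
  let ?S = "{i. m \<le> i \<and> i < m + q \<and> \<not> p dvd (2*i+1)}"
  let ?T = "{i. m \<le> i \<and> i < m + q \<and> \<not> p dvd (i+1)}"
  have pdvd: "p dvd (2 * j + 2) \<longleftrightarrow> p dvd (j + 1)" for j
  proof -
    have "p dvd 2 * (j+1) \<longleftrightarrow> p dvd 2 \<or> p dvd (j+1)" using pp prime_dvd_mult_iff by blast
    moreover have "\<not> p dvd 2"
    proof
      assume "p dvd 2"
      then have "p \<le> 2" by (simp add: dvd_imp_le)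
      with prime_ge_2_nat[OF pp] have "p = 2" by simp
      with podd show False by simp
    qed
    ultimately show ?thesis by (simp add: algebra_simps)
  qed
  have key: "p dvd (2 * \<tau> i + 2) \<longleftrightarrow> p dvd (2*i+1)" if "m \<le> i" "i < m + q" for i
  proof -
    have "int p dvd int (2 * \<tau> i + 2) - int (2*i+1)" using dvd_trans[OF pq cong[OF that]] .
    then have "int p dvd int (2 * \<tau> i + 2) \<longleftrightarrow> int p dvd int (2*i+1)"
      by (metis dvd_diff dvd_add_right_iff diff_add_cancel)
    then show ?thesis by (simp only: int_dvd_int_iff)
  qed
  have "int q dvd (\<Prod>i\<in>?S. int (2*i+1)) - (\<Prod>i\<in>?S. int (2 * \<tau> i + 2))"
  proof (rule dvd_prod_diff)
    fix i assume "i \<in> ?S"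
    then have "int q dvd int (2 * \<tau> i + 2) - int (2*i+1)" using cong by blast
    then have "int q dvd - (int (2 * \<tau> i + 2) - int (2*i+1))" by (simp only: dvd_minus_iff)
    then show "int q dvd int (2*i+1) - int (2 * \<tau> i + 2)" by (simp only: minus_diff_eq)
  qed
  moreover have "(\<Prod>i\<in>?S. int (2 * \<tau> i + 2)) = (\<Prod>i\<in>?T. int (2*i+2))"
  proof (rule prod.reindex_bij_witness[where j=\<tau> and i=\<sigma>])
    fix a assume a: "a \<in> ?S"
    then show "\<sigma> (\<tau> a) = a" using st by auto
    show "\<tau> a \<in> ?T" using a tau_range[of a] key[of a] pdvd[of "\<tau> a"] by auto
    show "int (2 * \<tau> a + 2) = int (2 * \<tau> a + 2)" by simp
  next
    fix b assume b: "b \<in> ?T"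
    then show "\<tau> (\<sigma> b) = b" using ts by auto
    show "\<sigma> b \<in> ?S" using b sigma_range[of b] key[of "\<sigma> b"] ts[of b] pdvd[of b] by auto
  qed
  ultimately show ?thesis by simp
qed


definition XO :: "nat \<Rightarrow> nat \<Rightarrow> nat \<Rightarrow> int" where
  "XO p n M = (\<Prod>i\<in>{i. n \<le> i \<and> i < n + M \<and> \<not> p dvd (2*i+1)}. int (2*i+1))"

definition XE :: "nat \<Rightarrow> nat \<Rightarrow> nat \<Rightarrow> int" where
  "XE p n M = (\<Prod>i\<in>{i. n \<le> i \<and> i < n + M \<and> \<not> p dvd (i+1)}. int (2*i+2))"

lemma set_split1: "{i::nat. i < n + M \<and> P i} = {i. i < n \<and> P i} \<union> {i. n \<le> i \<and> i < n + M \<and> P i}"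
  by auto

lemma set_split2: "{i::nat. n \<le> i \<and> i < n + (M1 + M2) \<and> P i} =
   {i. n \<le> i \<and> i < n + M1 \<and> P i} \<union> {i. n + M1 \<le> i \<and> i < n + M1 + M2 \<and> P i}"
  by auto

lemma Op_split: "Op p (n + M) = Op p n * XO p n M"
  unfolding Op_def XO_def set_split1 by (rule prod.union_disjoint) auto

lemma Ep_split: "Ep p (n + M) = Ep p n * XE p n M"
  unfolding Ep_def XE_def set_split1 by (rule prod.union_disjoint) auto

lemma XO_split: "XO p n (M1 + M2) = XO p n M1 * XO p (n + M1) M2"
  unfolding XO_def set_split2 by (rule prod.union_disjoint) auto

lemma XE_split: "XE p n (M1 + M2) = XE p n M1 * XE p (n + M1) M2"
  unfolding XE_def set_split2 by (rule prod.union_disjoint) auto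

context
  fixes p :: nat
  assumes pp: "prime p" and podd: "odd p"
begin

lemma X_cong: "int (p^(t+1)) dvd XO p n (z * p^(t+1)) - XE p n (z * p^(t+1))"
proof (induction z arbitrary: n)
  case 0
  have e: "\<And>P. {i::nat. n \<le> i \<and> i < n + 0 * p^(t+1) \<and> P i} = {}" by auto
  show ?case unfolding XO_def XE_def e by simp
next
  case (Suc z)
  define q where "q = p^(t+1)"
  have sp: "Suc z * q = q + z * q" by simp
  have b: "int q dvd XO p n q - XE p n q"
    using block_cong[OF pp podd q_def, of n] unfolding XO_def XE_def .
  have IH: "int q dvd XO p (n + q) (z * q) - XE p (n + q) (z * q)" using Suc.IH unfolding q_def .
  have "XO p n (Suc z * q) - XE p n (Suc z * q) =
     XO p n q * (XO p (n + q) (z * q) - XE p (n + q) (z * q)) + (XO p n q - XE p n q) * XE p (n + q) (z * q)"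
    unfolding sp XO_split XE_split by (simp add: algebra_simps)
  then show ?case using b IH unfolding q_def[symmetric] by simp
qed

lemma XE_nd: "\<not> int p dvd XE p n M"
proof
  assume "int p dvd XE p n M"
  then have "int p dvd Ep p (n + M)" unfolding Ep_split by simp
  then show False using Ep_nd[OF pp podd] by blast
qed

lemma ph_Zp0: "Zp p 0 (ph p n)"
proof -
  have "Zp p 0 (cc p n)"
  proof (cases "p < 2 * (n mod p)")
    case True
    then have "cc p n = of_nat (p * (2 * (n div p) + 1))" unfolding cc_def by (simp add: algebra_simps)
    then show ?thesis by (metis Zp_of_nat[OF pp])
  next
    case False
    then show ?thesis unfolding cc_def using Zp_1[OF pp] by simp
  qed
  then have "Zp p 0 (cc p n * of_int (Op p n))"
    using Zp_mult[OF pp _ Zp_of_int[OF pp], of 0] by simp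
  then show ?thesis unfolding ph_def by (rule Zp_div[OF pp _ Ep_nd[OF pp podd]])
qed

lemma aa_Zp0: "Zp p 0 (aa n)"
proof (induction n rule: less_induct)
  case (less n)
  show ?case
  proof (cases "n = 0")
    case True
    then show ?thesis unfolding aa_def using Zp_1[OF pp] by simp
  next
    case False
    then have "n div p < n" using prime_gt_1_nat[OF pp] by simp
    then have "Zp p 0 (aa (n div p))" by (rule less.IH)
    then show ?thesis unfolding aa_ph[OF pp podd, of n]
      using Zp_mult[OF pp ph_Zp0] by fastforce
  qed
qed

lemma ph_cont: "Zp p (t + 1) (ph p (n + z * p ^ (t + 1)) - ph p n)"
proof -
  define q where "q = p ^ (t + 1)"
  define M where "M = z * q"
  have p0: "p > 0" using pp prime_gt_0_nat by blast
  have Mq: "M = (z * p ^ t) * p" unfolding M_def q_def by simp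
  have m1: "(n + M) mod p = n mod p" unfolding Mq by simp
  have m2: "(n + M) div p = n div p + z * p ^ t" unfolding Mq using p0 by simp
  have ccd: "Zp p (t + 1) (cc p (n + M) - cc p n)"
  proof (cases "p < 2 * (n mod p)")
    case True
    have eq: "cc p (n + M) - cc p n = of_int (int (2 * z * q))"
      unfolding cc_def m1 m2 using True by (simp add: algebra_simps q_def)
    have "int p ^ (t + 1) dvd int (2 * z * q)" unfolding q_def by simp
    then show ?thesis unfolding eq by (rule Zp_int[OF pp])
  next
    case False
    then show ?thesis unfolding cc_def m1 using Zp_0[OF pp] by simp
  qed
  have E0: "(of_int (Ep p n) :: rat) \<noteq> 0" using Ep_nz[OF pp podd] by simp
  have X0: "(of_int (XE p n M) :: rat) \<noteq> 0" using XE_nd by (metis dvd_0_right of_int_eq_0_iff)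
  have "ph p (n + M) - ph p n =
    (cc p (n + M) - cc p n) * (of_int (Op p n * XO p n M) / of_int (Ep p n * XE p n M))
    + (cc p n * of_int (Op p n) / of_int (Ep p n)) * (of_int (XO p n M - XE p n M) / of_int (XE p n M))"
    unfolding ph_def Op_split Ep_split using E0 X0 by (simp add: field_simps)
  moreover have "Zp p (t + 1) ((cc p (n + M) - cc p n) * (of_int (Op p n * XO p n M) / of_int (Ep p n * XE p n M)))"
    by (intro Zp_mult0[OF pp ccd] Zp_div[OF pp Zp_of_int[OF pp]] pnd_mult[OF pp] Ep_nd[OF pp podd] XE_nd)
  moreover have "Zp p (t + 1) ((cc p n * of_int (Op p n) / of_int (Ep p n)) * (of_int (XO p n M - XE p n M) / of_int (XE p n M)))"
    using ph_Zp0[of n] unfolding ph_def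
    by (intro Zp_mult0'[OF pp] Zp_div[OF pp _ XE_nd] Zp_int[OF pp]) (use X_cong[of t n z] in \<open>simp_all add: M_def q_def\<close>)
  ultimately show ?thesis unfolding M_def q_def using Zp_add[OF pp] by simp
qed

end

lemma compose_Xp_nth:
  fixes f :: "rat fps"
  assumes p0: "p > 0"
  shows "(f oo fps_X ^ p) $ N = (if p dvd N then f $ (N div p) else 0)"
proof -
  have "(f oo fps_X ^ p) $ N = (\<Sum>i\<in>{0..N}. f $ i * ((fps_X ^ p) ^ i $ N))"
    by (rule fps_compose_nth)
  also have "\<dots> = (\<Sum>i\<in>{0..N}. if i = N div p \<and> p dvd N then f $ i else 0)"
  proof (rule sum.cong[OF refl])
    fix i assume "i \<in> {0..N}"
    have "(N = p * i) = (i = N div p \<and> p dvd N)" using p0 by auto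
    then show "f $ i * ((fps_X ^ p) ^ i $ N) = (if i = N div p \<and> p dvd N then f $ i else 0)"
      by (simp add: power_mult[symmetric])
  qed
  also have "\<dots> = (if p dvd N then f $ (N div p) else 0)"
  proof (cases "p dvd N")
    case True
    have "N div p \<in> {0..N}" by simp
    then show ?thesis using True by (simp add: sum.delta')
  qed simp
  finally show ?thesis .
qed

lemma mult_compose_nth:
  fixes f g :: "rat fps"
  assumes p0: "p > 0" and v: "v < p"
  shows "(f * (g oo fps_X ^ p)) $ (v + p * n) = (\<Sum>b\<le>n. f $ (v + p * (n - b)) * g $ b)"
proof -
  define N where "N = v + p * n"
  have "(f * (g oo fps_X ^ p)) $ N = (\<Sum>i\<in>{0..N}. f $ i * (if p dvd (N - i) then g $ ((N - i) div p) else 0))"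
    unfolding fps_mult_nth compose_Xp_nth[OF p0] ..
  also have "\<dots> = (\<Sum>i\<in>(\<lambda>b. N - p * b) ` {..n}. f $ i * (if p dvd (N - i) then g $ ((N - i) div p) else 0))"
  proof (rule sum.mono_neutral_right)
    show "(\<lambda>b. N - p * b) ` {..n} \<subseteq> {0..N}" by auto
    show "\<forall>i\<in>{0..N} - (\<lambda>b. N - p * b) ` {..n}. f $ i * (if p dvd (N - i) then g $ ((N - i) div p) else 0) = 0"
    proof
      fix i assume i: "i \<in> {0..N} - (\<lambda>b. N - p * b) ` {..n}"
      show "f $ i * (if p dvd (N - i) then g $ ((N - i) div p) else 0) = 0"
      proof (cases "p dvd (N - i)")
        case True
        then obtain b where b: "N - i = p * b" by blast
        have "p * b \<le> v + p * n" using b i unfolding N_def by simp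
        then have "b \<le> n"
        proof -
          assume h: "p * b \<le> v + p * n"
          show "b \<le> n"
          proof (rule ccontr)
            assume "\<not> b \<le> n"
            then have "Suc n \<le> b" by simp
            then have "p * Suc n \<le> p * b" by (rule mult_le_mono2)
            then show False using h v by simp
          qed
        qed
        moreover have "i = N - p * b" using b i by auto
        ultimately show ?thesis using i by auto
      qed simp
    qed
  qed simp
  also have "\<dots> = (\<Sum>b\<le>n. f $ (N - p * b) * g $ b)"
  proof -
    have inj: "inj_on (\<lambda>b. N - p * b) {..n}"
    proof (rule inj_onI)
      fix x y assume "x \<in> {..n}" "y \<in> {..n}" "N - p * x = N - p * y"
      then have xy: "x \<le> n" "y \<le> n" "N - p * x = N - p * y" by auto
      have "p * x \<le> p * n" "p * y \<le> p * n" using xy by (simp_all add: mult_le_mono2)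
      then have "p * x \<le> N" "p * y \<le> N" unfolding N_def by linarith+
      with xy have "p * x \<le> N" "p * y \<le> N" "N - p * x = N - p * y" by auto
      then have "p * x = p * y" by linarith
      then show "x = y" using p0 by simp
    qed
    have "(\<Sum>i\<in>(\<lambda>b. N - p * b) ` {..n}. f $ i * (if p dvd (N - i) then g $ ((N - i) div p) else 0))
      = (\<Sum>b\<le>n. f $ (N - p * b) * (if p dvd (N - (N - p * b)) then g $ ((N - (N - p * b)) div p) else 0))"
      by (rule sum.reindex[OF inj, unfolded comp_def])
    also have "\<dots> = (\<Sum>b\<le>n. f $ (N - p * b) * g $ b)"
    proof (rule sum.cong[OF refl])
      fix b assume "b \<in> {..n}"
      then have "p * b \<le> p * n" by (simp add: mult_le_mono2)
      then have "p * b \<le> N" unfolding N_def by linarith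
      then have "N - (N - p * b) = p * b" by simp
      then show "f $ (N - p * b) * (if p dvd (N - (N - p * b)) then g $ ((N - (N - p * b)) div p) else 0)
         = f $ (N - p * b) * g $ b" using p0 by simp
    qed
    finally show ?thesis .
  qed
  also have "\<dots> = (\<Sum>b\<le>n. f $ (v + p * (n - b)) * g $ b)"
  proof (rule sum.cong[OF refl])
    fix b assume "b \<in> {..n}"
    then have "N - p * b = v + p * (n - b)" unfolding N_def by (simp add: diff_mult_distrib2)
    then show "f $ (N - p * b) * g $ b = f $ (v + p * (n - b)) * g $ b" by simp
  qed
  finally show ?thesis unfolding N_def .
qed

lemma inverse_Zp0:
  fixes f :: "rat fps"
  assumes pp: "prime p" and f0: "f $ 0 = 1" and fz: "\<And>n. Zp p 0 (f $ n)"
  shows "Zp p 0 (inverse f $ n)"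
proof (induction n rule: less_induct)
  case (less n)
  show ?case
  proof (cases n)
    case 0
    then show ?thesis using f0 Zp_1[OF pp] by simp
  next
    case (Suc m)
    have "(f * inverse f) $ n = 0" using inverse_mult_eq_1'[of f] f0 Suc by simp
    then have "(\<Sum>i=0..n. f $ i * inverse f $ (n - i)) = 0" by (simp add: fps_mult_nth)
    moreover have "(\<Sum>i=0..n. f $ i * inverse f $ (n - i)) = f $ 0 * inverse f $ n + (\<Sum>i=1..n. f $ i * inverse f $ (n - i))"
      by (simp add: sum.atLeast_Suc_atMost)
    ultimately have e: "inverse f $ n = - (\<Sum>i=1..n. f $ i * inverse f $ (n - i))" using f0 by simp
    have "Zp p 0 (\<Sum>i=1..n. f $ i * inverse f $ (n - i))"
    proof (rule Zp_sum[OF pp])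
      fix i assume "i \<in> {1..n}"
      then have "n - i < n" by auto
      then show "Zp p 0 (f $ i * inverse f $ (n - i))"
        using Zp_mult[OF pp fz less.IH] by simp
    qed
    then show ?thesis unfolding e by (rule Zp_uminus[OF pp])
  qed
qed

lemma mult_Zp:
  fixes f g :: "rat fps"
  assumes pp: "prime p" and "\<And>n. Zp p s (f $ n)" and "\<And>n. Zp p 0 (g $ n)"
  shows "Zp p s ((f * g) $ n)"
  unfolding fps_mult_nth using assms by (intro Zp_sum[OF pp]) (simp add: Zp_mult0[OF pp])


lemma hypF_nth: "hypF k $ n = aa n ^ k"
proof -
  have "pochhammer (1/2 :: rat) n / fact n = aa n"
  proof (induction n)
    case 0
    then show ?case unfolding aa_def by simp
  next
    case (Suc n)
    have "pochhammer (1/2 :: rat) (Suc n) / fact (Suc n) =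
      (pochhammer (1/2) n / fact n) * ((1/2 + of_nat n) / of_nat (Suc n))"
      by (simp add: pochhammer_Suc field_simps)
    also have "(1/2 + of_nat n) / of_nat (Suc n) = (of_nat (2*n+1) / of_nat (2*n+2) :: rat)"
      by (simp add: field_simps)
    finally show ?case using Suc.IH aa_Suc by simp
  qed
  then show ?thesis unfolding hypF_def by simp
qed

theorem mainTheorem3:
  fixes k p s :: nat
  assumes "k \<ge> 2" and "prime p" and "odd p" and "s \<ge> 1"
  shows "fps_cong_pow p s
           (hypF k / (hypF k oo fps_X ^ p))
           (fps_trunc (p ^ s) (hypF k) / (fps_trunc (p ^ (s - 1)) (hypF k) oo fps_X ^ p))"
proof -
  note pp = \<open>prime p\<close> and podd = \<open>odd p\<close>
  have p0: "p > 0" using pp prime_gt_0_nat by blast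
  define A where "A = (\<lambda>n. aa n ^ k)"
  define \<Phi> where "\<Phi> = (\<lambda>n. ph p n ^ k)"
  have A\<Phi>: "\<And>n. A n = \<Phi> n * A (n div p)"
    unfolding A_def \<Phi>_def by (metis aa_ph[OF pp podd] power_mult_distrib)
  have A0: "\<And>n. Zp p 0 (A n)" unfolding A_def using Zp_power0[OF pp aa_Zp0[OF pp podd]] .
  have \<Phi>0: "\<And>n. Zp p 0 (\<Phi> n)" unfolding \<Phi>_def using Zp_power0[OF pp ph_Zp0[OF pp podd]] .
  have \<Phi>c: "\<And>n z t. Zp p (t + 1) (\<Phi> (n + z * p ^ (t + 1)) - \<Phi> n)"
    unfolding \<Phi>_def by (rule Zp_power_diff[OF pp ph_Zp0[OF pp podd] ph_Zp0[OF pp podd] ph_cont[OF pp podd]])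
  note WZ = Wsum_Zp[OF pp podd A\<Phi> A0 \<Phi>0 \<Phi>c]
  define r where "r = s - 1"
  have sr: "s = r + 1" unfolding r_def using \<open>s \<ge> 1\<close> by simp
  define F where "F = hypF k"
  define T where "T = fps_trunc (p ^ s) F"
  define T' where "T' = fps_trunc (p ^ r) F"
  define G where "G = F oo fps_X ^ p"
  define G' where "G' = T' oo fps_X ^ p"
  have Fn: "F $ n = A n" for n unfolding F_def A_def hypF_nth ..
  have Tn: "T $ n = (if n < p ^ s then A n else 0)" for n unfolding T_def fps_trunc_def Fn by simp
  have T'n: "T' $ n = (if n < p ^ r then A n else 0)" for n unfolding T'_def fps_trunc_def Fn by simp
  have G0: "G $ 0 = 1" unfolding G_def by (simp add: Fn A_def aa_def)
  have G'0: "G' $ 0 = 1" unfolding G'_def using p0 by (simp add: T'n A_def aa_def)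
  have GZ: "Zp p 0 (G $ n)" for n unfolding G_def compose_Xp_nth[OF p0] Fn using A0 Zp_0[OF pp] by simp
  have G'Z: "Zp p 0 (G' $ n)" for n unfolding G'_def compose_Xp_nth[OF p0] T'n using A0 Zp_0[OF pp] by simp
  define Q where "Q = F * G' - T * G"
  have QZ: "Zp p s (Q $ N)" for N
  proof -
    define v where "v = N mod p"
    define n where "n = N div p"
    have N: "N = v + p * n" unfolding v_def n_def by simp
    have vp: "v < p" unfolding v_def using p0 by simp
    define D0 where "D0 = (\<lambda>x y. \<Phi> (v + p * y) - \<Phi> (v + p * x))"
    have P: "Pcl p 1 D0"
      unfolding Pcl_def
    proof (intro conjI allI)
      fix x y
      show "D0 x y = - D0 y x" unfolding D0_def by simp
      have "D0 x y = (\<Phi> (v + y * p ^ (0 + 1)) - \<Phi> v) - (\<Phi> (v + x * p ^ (0 + 1)) - \<Phi> v)"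
        unfolding D0_def by (simp add: mult.commute)
      moreover have h1: "Zp p (0 + 1) (\<Phi> (v + y * p ^ (0 + 1)) - \<Phi> v)" by (rule \<Phi>c)
      moreover have h2: "Zp p (0 + 1) (\<Phi> (v + x * p ^ (0 + 1)) - \<Phi> v)" by (rule \<Phi>c)
      ultimately show "Zp p 1 (D0 x y)" using Zp_diff[OF pp h1 h2] by simp
      fix z t
      have "D0 (x + z * p ^ t) y - D0 x y = - (\<Phi> ((v + p * x) + z * p ^ (t + 1)) - \<Phi> (v + p * x))"
        unfolding D0_def by (simp add: algebra_simps)
      moreover have "Zp p (t + 1) (- (\<Phi> ((v + p * x) + z * p ^ (t + 1)) - \<Phi> (v + p * x)))"
        by (rule Zp_uminus[OF pp \<Phi>c])
      ultimately show "Zp p (t + 1) (D0 (x + z * p ^ t) y - D0 x y)" by simp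
    qed
    have W: "Zp p (r + 1) (Wsum p A r n D0)" using WZ[OF P] .
    have Av: "A (v + p * j) = \<Phi> (v + p * j) * A j" for j using A\<Phi>[of "v + p * j"] vp by simp
    have "Wsum p A r n D0 = (\<Sum>j<p^r. if j \<le> n then A (v + p * (n - j)) * A j - A (v + p * j) * A (n - j) else 0)"
      unfolding Wsum_def D0_def Av by (intro sum.cong refl) (simp add: algebra_simps)
    also have "\<dots> = sum (\<lambda>j. A (v + p * (n - j)) * A j - A (v + p * j) * A (n - j)) {j \<in> {..<p^r}. j \<le> n}"
      by (rule sum.inter_filter[symmetric]) simp
    also have "{j \<in> {..<p^r}. j \<le> n} = {j \<in> {..n}. j < p^r}" by auto
    also have "sum (\<lambda>j. A (v + p * (n - j)) * A j - A (v + p * j) * A (n - j)) {j \<in> {..n}. j < p^r}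
       = (\<Sum>j\<le>n. if j < p^r then A (v + p * (n - j)) * A j - A (v + p * j) * A (n - j) else 0)"
      by (rule sum.inter_filter) simp
    also have "\<dots> = (\<Sum>j\<le>n. (if j < p^r then A (v + p * (n - j)) * A j else 0))
                  - (\<Sum>j\<le>n. (if j < p^r then A (v + p * j) * A (n - j) else 0))"
      unfolding sum_subtractf[symmetric] by (intro sum.cong refl) simp
    also have "(\<Sum>j\<le>n. (if j < p^r then A (v + p * j) * A (n - j) else 0))
       = (\<Sum>b\<le>n. (if n - b < p^r then A (v + p * (n - b)) * A b else 0))"
      by (rule sum.reindex_bij_witness[where i="\<lambda>b. n - b" and j="\<lambda>b. n - b"]) auto
    finally have Weq: "Wsum p A r n D0 = (\<Sum>j\<le>n. (if j < p^r then A (v + p * (n - j)) * A j else 0))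
       - (\<Sum>b\<le>n. (if n - b < p^r then A (v + p * (n - b)) * A b else 0))" .
    have "(F * G') $ N = (\<Sum>b\<le>n. (if b < p^r then A (v + p * (n - b)) * A b else 0))"
      unfolding N G'_def mult_compose_nth[OF p0 vp] Fn T'n by (intro sum.cong refl) simp
    moreover have "(T * G) $ N = (\<Sum>b\<le>n. (if n - b < p^r then A (v + p * (n - b)) * A b else 0))"
      unfolding N G_def mult_compose_nth[OF p0 vp] Tn Fn
    proof (intro sum.cong refl)
      fix b
      have "(v + p * (n - b) < p ^ s) = (n - b < p ^ r)"
      proof
        assume h: "v + p * (n - b) < p ^ s"
        show "n - b < p ^ r"
        proof (rule ccontr)
          assume "\<not> n - b < p ^ r"
          then have "p ^ r \<le> n - b" by simp
          then have "p * p ^ r \<le> p * (n - b)" by (rule mult_le_mono2)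
          moreover have "p ^ s = p * p ^ r" using sr by simp
          ultimately show False using h by linarith
        qed
      next
        assume "n - b < p ^ r"
        then have "Suc (n - b) \<le> p ^ r" by simp
        then have "p * Suc (n - b) \<le> p * p ^ r" by (rule mult_le_mono2)
        then show "v + p * (n - b) < p ^ s" using vp sr by simp
      qed
      then show "(if v + p * (n - b) < p ^ s then A (v + p * (n - b)) else 0) * A b =
         (if n - b < p ^ r then A (v + p * (n - b)) * A b else 0)" by simp
    qed
    ultimately have "Q $ N = Wsum p A r n D0" unfolding Q_def Weq by simp
    then show ?thesis using W sr by simp
  qed
  have iG: "Zp p 0 (inverse G $ n)" for n by (rule inverse_Zp0[OF pp G0 GZ])
  have iG': "Zp p 0 (inverse G' $ n)" for n by (rule inverse_Zp0[OF pp G'0 G'Z])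
  have "F / G - T / G' = Q * (inverse G * inverse G')"
  proof -
    have "F / G = F * inverse G" using G0 by (simp add: fps_divide_unit)
    moreover have "T / G' = T * inverse G'" using G'0 by (simp add: fps_divide_unit)
    moreover have "G * inverse G = 1" "G' * inverse G' = 1" using G0 G'0 by (simp_all add: inverse_mult_eq_1')
    moreover have "Q * (inverse G * inverse G') = F * inverse G * (G' * inverse G') - T * inverse G' * (G * inverse G)"
      unfolding Q_def by (simp add: algebra_simps)
    ultimately show ?thesis by simp
  qed
  then have "Zp p s ((F / G - T / G') $ n)" for n
  proof -
    have "Zp p 0 ((inverse G * inverse G') $ m)" for m
      by (rule mult_Zp[OF pp iG iG'])
    then have "Zp p s ((Q * (inverse G * inverse G')) $ n)" by (rule mult_Zp[OF pp QZ])
    then show ?thesis using \<open>F / G - T / G' = _\<close> by simp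
  qed
  then show ?thesis unfolding fps_cong_pow_def rat_cong_pow_Zp F_def[symmetric]
    T_def[symmetric] T'_def[symmetric] r_def[symmetric] G_def[symmetric] G'_def[symmetric] by simp
qed


end
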